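(* Let $V$ be a real Hilbert space, $W\subset V$ a subspace of finite dimension $m$, $\mathcal M\subset V$ a bounded set, and $Z_N\subset V$ a subspace of finite dimension $N$. Let $\widetilde W^\perp$ be the orthogonal complement of $W$ in $W+Z_N$, and set $\varepsilon_N:=\sup_{u\in\mathcal M}\operatorname{dist}(u,Z_N)$. Define, for $c\in W^\perp$ and linear $B:W\to W^\perp$, $$F(c,B)=\sup_{u\in\mathcal M}\|P_{W^\perp}u-c-B(P_Wu)\|,$$ and suppose $(\bar c,\bar B)$ minimizes $F$ over $\widetilde W^\perp\times\mathcal L(W,\widetilde W^\perp)$. Let $\widetilde A(w)=w+\bar c+\bar B w$. Then, with $E^*_{\mathrm{wca}}(\mathcal M):=\inf\{E_{\mathrm{wc}}(A,\mathcal M): A:W\to V\text{ affine}\}$, $$E^*_{\mathrm{wca}}(\mathcal M)\le E_{\mathrm{wc}}(\widetilde A,\mathcal M)\le E^*_{\mathrm{wca}}(\mathcal M)+\varepsilon_N.$$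
   Context: $P_W$, $P_{W^\perp}$ are orthogonal projections onto $W$ and its orthogonal complement $W^\perp$ in $V$. $\mathcal L(X,Y)$ denotes linear maps from $X$ to $Y$. For a map $A:W\to V$, $E_{\mathrm{wc}}(A,\mathcal M)=\sup\{\|u-A(P_Wu)\|:u\in\mathcal M\}$. $\operatorname{dist}(u,Z_N)=\inf_{z\in Z_N}\|u-z\|$. *)

theory Defs
  imports "HOL-Analysis.Analysis"
begin

definition orth_compl :: "'a::real_inner set \<Rightarrow> 'a set" where
  "orth_compl S = {x. \<forall>y\<in>S. inner x y = 0}"

definition orth_proj :: "'a::real_inner set \<Rightarrow> 'a \<Rightarrow> 'a" where
  "orth_proj S u = (THE p. p \<in> S \<and> (\<forall>y\<in>S. inner (u - p) y = 0))"

definition E_wc :: "'a::real_inner set \<Rightarrow> ('a \<Rightarrow> 'a) \<Rightarrow> 'a set \<Rightarrow> real" where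
  "E_wc W A M = (SUP u\<in>M. norm (u - A (orth_proj W u)))"

definition affine_on :: "'a::real_vector set \<Rightarrow> ('a \<Rightarrow> 'a) \<Rightarrow> bool" where
  "affine_on W A \<longleftrightarrow> (\<exists>c L. linear L \<and> (\<forall>w\<in>W. A w = c + L w))"

definition E_wca_opt :: "'a::real_inner set \<Rightarrow> 'a set \<Rightarrow> real" where
  "E_wca_opt W M = (INF A\<in>{A. affine_on W A}. E_wc W A M)"

definition F_obj :: "'a::real_inner set \<Rightarrow> 'a set \<Rightarrow> 'a \<Rightarrow> ('a \<Rightarrow> 'a) \<Rightarrow> real" where
  "F_obj W M c B = (SUP u\<in>M. norm (orth_proj (orth_compl W) u - c - B (orth_proj W u)))"

end

theory Submission
  imports Defs
begin

definition onproj :: "'a::real_inner set \<Rightarrow> 'a \<Rightarrow> 'a" where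
  "onproj E u = (\<Sum>e\<in>E. inner u e *\<^sub>R e)"

lemma orthonormal_basis_fin:
  fixes B :: "'a::real_inner set"
  assumes "finite B"
  obtains E where "finite E" "span E = span B" "pairwise orthogonal E" "\<And>e. e \<in> E \<Longrightarrow> norm e = 1"
proof -
  obtain C where C: "finite C" "span C = span B" "pairwise orthogonal C"
    using basis_orthogonal[OF assms] by blast
  define C' where "C' = C - {0}"
  have C': "finite C'" "span C' = span B" "pairwise orthogonal C'" "0 \<notin> C'"
    using C by (auto simp: C'_def span_delete_0 pairwise_def)
  define E where "E = (\<lambda>x. x /\<^sub>R norm x) ` C'"
  have 1: "finite E" using C' by (simp add: E_def)
  have 2: "pairwise orthogonal E"
    using C'(3) by (force simp: E_def pairwise_def orthogonal_clauses)
  have 3: "\<And>e. e \<in> E \<Longrightarrow> norm e = 1"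
    using C'(4) by (auto simp: E_def) (metis left_inverse norm_eq_zero)
  have "E \<subseteq> span C'" by (auto simp: E_def span_base span_mul)
  moreover have "C' \<subseteq> span E"
  proof
    fix x assume x: "x \<in> C'"
    then have "x /\<^sub>R norm x \<in> span E" by (auto simp: E_def span_base)
    then have "norm x *\<^sub>R (x /\<^sub>R norm x) \<in> span E" by (rule span_mul)
    moreover have "norm x *\<^sub>R (x /\<^sub>R norm x) = x" using x C'(4)
      by (metis divideR_right norm_eq_zero)
    ultimately show "x \<in> span E" by simp
  qed
  ultimately have "span E = span C'" by (simp add: span_eq)
  then show ?thesis using that 1 2 3 C'(2) by metis
qed

lemma onproj_in: "onproj E u \<in> span E"
  unfolding onproj_def by (intro span_sum span_mul span_base)

lemma onproj_orth_basis:
  assumes "finite E" "pairwise orthogonal E" "\<And>e. e \<in> E \<Longrightarrow> norm e = 1" "e \<in> E"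
  shows "inner (u - onproj E u) e = 0"
proof -
  have "inner (onproj E u) e = (\<Sum>e'\<in>E. inner u e' * inner e' e)"
    by (simp add: onproj_def inner_sum_left)
  also have "\<dots> = (\<Sum>e'\<in>E. if e' = e then inner u e else 0)"
  proof (rule sum.cong[OF refl])
    fix e' assume e': "e' \<in> E"
    show "inner u e' * inner e' e = (if e' = e then inner u e else 0)"
    proof (cases "e' = e")
      case True
      then have "inner e' e = 1" using assms(3)[OF assms(4)] by (simp add: norm_eq_1)
      then show ?thesis using True by simp
    next
      case False
      then have "inner e' e = 0" using assms(2) e' assms(4)
        by (auto simp: pairwise_def orthogonal_def)
      then show ?thesis using False by simp
    qed
  qed
  also have "\<dots> = inner u e" using assms(1,4) by simp
  finally show ?thesis by (simp add: inner_diff_left)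
qed

lemma onproj_orth:
  assumes "finite E" "pairwise orthogonal E" "\<And>e. e \<in> E \<Longrightarrow> norm e = 1" "y \<in> span E"
  shows "inner (u - onproj E u) y = 0"
proof -
  have "orthogonal (u - onproj E u) y"
    using assms(4) by (rule orthogonal_to_span) (simp add: orthogonal_def onproj_orth_basis[OF assms(1-3)])
  then show ?thesis by (simp add: orthogonal_def)
qed

lemma orth_proj_unique:
  assumes "subspace S" "p \<in> S" "\<forall>y\<in>S. inner (u - p) y = 0"
  shows "orth_proj S u = p"
  unfolding orth_proj_def
proof (rule the_equality)
  show "p \<in> S \<and> (\<forall>y\<in>S. inner (u - p) y = 0)" using assms by blast
next
  fix q assume q: "q \<in> S \<and> (\<forall>y\<in>S. inner (u - q) y = 0)"
  have d: "q - p \<in> S" using assms(1,2) q by (simp add: subspace_diff)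
  have "inner (u - q) (q - p) = 0" "inner (u - p) (q - p) = 0" using q assms(3) d by auto
  then have "inner (q - p) (q - p) = 0" by (simp add: inner_diff_left inner_diff_right algebra_simps)
  then show "q = p" by simp
qed

lemma orth_proj_span:
  assumes "finite E" "pairwise orthogonal E" "\<And>e. e \<in> E \<Longrightarrow> norm e = 1"
  shows "orth_proj (span E) u = onproj E u"
  using orth_proj_unique[OF subspace_span onproj_in] onproj_orth[OF assms] by blast

lemma onproj_linear: "linear (onproj E)"
  by (rule linearI) (simp_all add: onproj_def inner_add_left scaleR_add_left sum.distrib scaleR_sum_right)

lemma pyth:
  fixes a b :: "'a::real_inner"
  assumes "inner a b = 0"
  shows "norm a \<le> norm (a + b)" "norm b \<le> norm (a + b)"
proof -
  have "inner (a+b) (a+b) = inner a a + inner b b"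
    using assms by (simp add: inner_add_left inner_add_right inner_commute)
  then show "norm a \<le> norm (a + b)" "norm b \<le> norm (a + b)"
    by (simp_all add: norm_le)
qed

lemma onproj_norm:
  assumes "finite E" "pairwise orthogonal E" "\<And>e. e \<in> E \<Longrightarrow> norm e = 1"
  shows "norm (onproj E u) \<le> norm u"
proof -
  have "inner (u - onproj E u) (onproj E u) = 0"
    using onproj_orth[OF assms onproj_in] .
  then have "inner (onproj E u) (u - onproj E u) = 0" by (simp add: inner_commute)
  from pyth(1)[OF this] show ?thesis by simp
qed

lemma onproj_best:
  assumes "finite E" "pairwise orthogonal E" "\<And>e. e \<in> E \<Longrightarrow> norm e = 1" "y \<in> span E"
  shows "norm (u - onproj E u) \<le> norm (u - y)"
proof -
  have "onproj E u - y \<in> span E" using onproj_in assms(4) by (rule span_diff)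
  then have "inner (u - onproj E u) (onproj E u - y) = 0"
    using onproj_orth[OF assms(1-3)] by blast
  from pyth(1)[OF this] show ?thesis by simp
qed

lemma onproj_bound:
  assumes "finite E" "\<And>e. e \<in> E \<Longrightarrow> norm e = 1" "linear L" "norm u \<le> R"
  shows "norm (L (onproj E u)) \<le> R * (\<Sum>e\<in>E. norm (L e))"
proof -
  have "L (onproj E u) = (\<Sum>e\<in>E. inner u e *\<^sub>R L e)"
    by (simp add: onproj_def linear_sum[OF assms(3)] linear_scale[OF assms(3)])
  also have "norm \<dots> \<le> (\<Sum>e\<in>E. norm (inner u e *\<^sub>R L e))" by (rule norm_sum)
  also have "\<dots> \<le> (\<Sum>e\<in>E. R * norm (L e))"
  proof (rule sum_mono)
    fix e assume e: "e \<in> E"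
    have "\<bar>inner u e\<bar> \<le> norm u * norm e" by (rule Cauchy_Schwarz_ineq2)
    then have "\<bar>inner u e\<bar> \<le> R" using assms(2)[OF e] assms(4) by simp
    then show "norm (inner u e *\<^sub>R L e) \<le> R * norm (L e)"
      by (simp add: mult_right_mono)
  qed
  also have "\<dots> = R * (\<Sum>e\<in>E. norm (L e))" by (simp add: sum_distrib_left)
  finally show ?thesis .
qed


theorem mainTheorem3:
  fixes W Z M :: "'a::{real_inner, complete_space} set"
    and m N :: nat
    and cbar :: 'a and Bbar :: "'a \<Rightarrow> 'a"
  assumes W_sub: "subspace W" and W_fin: "\<exists>B. finite B \<and> W = span B" and W_dim: "dim W = m"
    and Z_sub: "subspace Z" and Z_fin: "\<exists>B. finite B \<and> Z = span B" and Z_dim: "dim Z = N"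
    and M_bdd: "bounded M" and M_ne: "M \<noteq> {}"
    and Wt_def: "Wt = {w + z | w z. w \<in> W \<and> z \<in> Z} \<inter> orth_compl W"
    and eps_def: "eps = (SUP u\<in>M. infdist u Z)"
    and cbar_in: "cbar \<in> Wt"
    and Bbar_lin: "linear Bbar" and Bbar_into: "Bbar ` W \<subseteq> Wt"
    and minimizer: "\<And>c B. c \<in> Wt \<Longrightarrow> linear B \<Longrightarrow> B ` W \<subseteq> Wt \<Longrightarrow>
                       F_obj W M cbar Bbar \<le> F_obj W M c B"
    and Atilde_def: "Atilde = (\<lambda>w. w + cbar + Bbar w)"
  shows "E_wca_opt W M \<le> E_wc W Atilde M \<and> E_wc W Atilde M \<le> E_wca_opt W M + eps"
proof -
  obtain BW where BW: "finite BW" "W = span BW" using W_fin by blast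
  obtain BZ where BZ: "finite BZ" "Z = span BZ" using Z_fin by blast
  obtain E1 where E1: "finite E1" "span E1 = span BW" "pairwise orthogonal E1" "\<And>e. e \<in> E1 \<Longrightarrow> norm e = 1"
    using orthonormal_basis_fin[OF BW(1)] by blast
  have WE1: "W = span E1" using BW E1 by simp
  define P where "P = onproj E1"
  have PW: "\<And>u. orth_proj W u = P u" unfolding P_def WE1 by (rule orth_proj_span[OF E1(1,3,4)])
  have Pin: "\<And>u. P u \<in> W" unfolding P_def WE1 by (rule onproj_in)
  have Porth: "\<And>u y. y \<in> W \<Longrightarrow> inner (u - P u) y = 0"
    unfolding P_def WE1 by (rule onproj_orth[OF E1(1,3,4)])
  have Plin: "linear P" unfolding P_def by (rule onproj_linear)
  define f where "f = (\<lambda>x. x - P x)"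
  have flin: "linear f" unfolding f_def
    by (rule linearI) (simp_all add: linear_add[OF Plin] linear_scale[OF Plin] algebra_simps)
  have fnorm: "\<And>v. norm (f v) \<le> norm v"
  proof -
    fix v
    have "inner (v - P v) (P v) = 0" using Porth Pin by blast
    from pyth(1)[OF this] show "norm (f v) \<le> norm v" by (simp add: f_def)
  qed
  have OCsub: "subspace (orth_compl W)"
    unfolding subspace_def orth_compl_def by (auto simp: inner_add_left)
  have fOC: "\<And>u. f u \<in> orth_compl W" unfolding orth_compl_def f_def using Porth by blast
  have PP: "\<And>u. orth_proj (orth_compl W) u = f u"
  proof -
    fix u
    have "\<forall>y\<in>orth_compl W. inner (u - f u) y = 0"
      using Pin by (auto simp: f_def orth_compl_def inner_commute)
    then show "orth_proj (orth_compl W) u = f u" using orth_proj_unique[OF OCsub fOC] by blast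
  qed
  have WZ: "span (BW \<union> BZ) = {w + z | w z. w \<in> W \<and> z \<in> Z}"
    by (simp add: span_Un BW BZ)
  have Wt_img: "Wt = f ` span (BW \<union> BZ)"
  proof
    show "Wt \<subseteq> f ` span (BW \<union> BZ)"
    proof
      fix y assume y: "y \<in> Wt"
      then have y1: "y \<in> span (BW \<union> BZ)" and y2: "y \<in> orth_compl W"
        using Wt_def WZ by auto
      have "orth_proj W y = 0"
        using y2 W_sub by (intro orth_proj_unique) (auto simp: orth_compl_def subspace_0)
      then have "f y = y" using PW by (simp add: f_def)
      then show "y \<in> f ` span (BW \<union> BZ)" using y1 by force
    qed
  next
    show "f ` span (BW \<union> BZ) \<subseteq> Wt"
    proof
      fix y assume "y \<in> f ` span (BW \<union> BZ)"
      then obtain x where x: "x \<in> span (BW \<union> BZ)" "y = f x" by blast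
      have "P x \<in> span (BW \<union> BZ)" using Pin BW(2) span_mono[of BW "BW \<union> BZ"] by blast
      then have "f x \<in> span (BW \<union> BZ)" using x(1) by (simp add: f_def span_diff)
      then show "y \<in> Wt" using x fOC Wt_def WZ by auto
    qed
  qed
  have Wt_span: "Wt = span (f ` (BW \<union> BZ))" using Wt_img span_linear_image[OF flin] by simp
  obtain E2 where E2: "finite E2" "span E2 = span (f ` (BW \<union> BZ))" "pairwise orthogonal E2" "\<And>e. e \<in> E2 \<Longrightarrow> norm e = 1"
    using orthonormal_basis_fin[of "f ` (BW \<union> BZ)"] BW(1) BZ(1) by blast
  have WtE2: "Wt = span E2" using Wt_span E2 by simp
  define Q where "Q = onproj E2"
  have Qin: "\<And>u. Q u \<in> Wt" unfolding Q_def WtE2 by (rule onproj_in)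
  have Qlin: "linear Q" unfolding Q_def by (rule onproj_linear)
  have Qnorm: "\<And>u. norm (Q u) \<le> norm u" unfolding Q_def by (rule onproj_norm[OF E2(1,3,4)])
  have Qbest: "\<And>u y. y \<in> Wt \<Longrightarrow> norm (u - Q u) \<le> norm (u - y)"
    unfolding Q_def WtE2 by (rule onproj_best[OF E2(1,3,4)])
  have fZ: "\<And>z. z \<in> Z \<Longrightarrow> f z \<in> Wt"
    using Wt_img BZ(2) span_mono[of BZ "BW \<union> BZ"] by blast
  obtain R where R: "\<And>u. u \<in> M \<Longrightarrow> norm u \<le> R" using M_bdd bounded_iff by blast
  have Zne: "Z \<noteq> {}" using Z_sub subspace_0 by blast
  have infd: "\<And>u. norm (f u - Q (f u)) \<le> infdist u Z"
  proof -
    fix u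
    show "norm (f u - Q (f u)) \<le> infdist u Z"
      unfolding infdist_def using Zne
    proof (simp, intro cINF_greatest)
      fix z assume z: "z \<in> Z"
      have "norm (f u - Q (f u)) \<le> norm (f u - f z)" using Qbest fZ[OF z] by blast
      also have "\<dots> = norm (f (u - z))" by (simp add: linear_diff[OF flin])
      also have "\<dots> \<le> dist u z" using fnorm by (simp add: dist_norm)
      finally show "norm (f u - Q (f u)) \<le> dist u z" .
    qed (use Zne in auto)
  qed
  have eps_bdd: "bdd_above ((\<lambda>u. infdist u Z) ` M)"
  proof (rule bdd_aboveI2)
    fix u assume "u \<in> M"
    have "infdist u Z \<le> dist u 0" using Z_sub subspace_0 infdist_le by blast
    then show "infdist u Z \<le> R" using R[OF \<open>u \<in> M\<close>] by simp
  qed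
  have eps_up: "\<And>u. u \<in> M \<Longrightarrow> infdist u Z \<le> eps"
    unfolding eps_def using eps_bdd by (intro cSUP_upper)
  have bddA: "bdd_above ((\<lambda>u. norm (u - A (orth_proj W u))) ` M)" if Aff0: "affine_on W A" for A
  proof -
    obtain c L where cL: "linear L" "\<And>w. w \<in> W \<Longrightarrow> A w = c + L w"
      using Aff0 unfolding affine_on_def by blast
    show ?thesis
    proof (rule bdd_aboveI2)
      fix u assume u: "u \<in> M"
      have "norm (u - A (orth_proj W u)) = norm (u - c - L (onproj E1 u))"
        using cL(2)[OF Pin] PW by (simp add: P_def algebra_simps)
      also have "\<dots> \<le> norm u + norm c + norm (L (onproj E1 u))" by (rule order_trans[OF norm_triangle_ineq4]) (simp add: norm_triangle_ineq4)
      also have "\<dots> \<le> R + norm c + R * (\<Sum>e\<in>E1. norm (L e))"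
        using R[OF u] onproj_bound[OF E1(1) E1(4) cL(1) R[OF u]] by simp
      finally show "norm (u - A (orth_proj W u)) \<le> R + norm c + R * (\<Sum>e\<in>E1. norm (L e))" .
    qed
  qed
  have nonneg: "0 \<le> E_wc W A M" if Aff1: "affine_on W A" for A
  proof -
    obtain u where "u \<in> M" using M_ne by blast
    have "norm (u - A (orth_proj W u)) \<le> E_wc W A M"
      unfolding E_wc_def using bddA[OF Aff1] \<open>u \<in> M\<close> by (rule cSUP_upper2) simp
    then show ?thesis by (meson norm_ge_zero order_trans)
  qed
  have At_aff: "affine_on W Atilde"
    unfolding affine_on_def Atilde_def
    by (rule exI[of _ cbar], rule exI[of _ "\<lambda>w. w + Bbar w"])
       (auto intro!: linearI simp: linear_add[OF Bbar_lin] linear_scale[OF Bbar_lin] algebra_simps)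
  have Et_F: "E_wc W Atilde M = F_obj W M cbar Bbar"
    unfolding E_wc_def F_obj_def PP PW Atilde_def f_def by (simp add: algebra_simps)
  have key: "E_wc W Atilde M \<le> E_wc W A M + eps" if Aff: "affine_on W A" for A
  proof -
    obtain c L where cL: "linear L" "\<And>w. w \<in> W \<Longrightarrow> A w = c + L w"
      using Aff unfolding affine_on_def by blast
    define c2 where "c2 = Q (f c)"
    define B2 where "B2 = Q \<circ> f \<circ> L"
    have c2in: "c2 \<in> Wt" using Qin c2_def by simp
    have B2lin: "linear B2" unfolding B2_def by (intro linear_compose cL(1) flin Qlin)
    have B2in: "B2 ` W \<subseteq> Wt" using Qin by (auto simp: B2_def)
    have "F_obj W M c2 B2 \<le> E_wc W A M + eps"
      unfolding F_obj_def
    proof (rule cSUP_least[OF M_ne])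
      fix u assume u: "u \<in> M"
      define x where "x = f (u - A (P u))"
      have x_eq: "x = f u - f c - f (L (P u))"
        using cL(2)[OF Pin] by (simp add: x_def linear_diff[OF flin] linear_add[OF flin])
      have "orth_proj (orth_compl W) u - c2 - B2 (orth_proj W u) = Q x + (f u - Q (f u))"
        by (simp add: PP PW c2_def B2_def x_eq linear_diff[OF Qlin])
      then have "norm (orth_proj (orth_compl W) u - c2 - B2 (orth_proj W u)) \<le> norm (Q x) + norm (f u - Q (f u))"
        by (simp add: norm_triangle_ineq)
      also have "\<dots> \<le> norm (u - A (P u)) + infdist u Z"
        using Qnorm[of x] fnorm[of "u - A (P u)"] infd[of u] by (simp add: x_def)
      also have "\<dots> \<le> E_wc W A M + eps"
      proof (rule add_mono)
        show "norm (u - A (P u)) \<le> E_wc W A M"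
          unfolding E_wc_def using bddA[OF Aff] u by (rule cSUP_upper2) (simp add: PW)
        show "infdist u Z \<le> eps" using eps_up[OF u] .
      qed
      finally show "norm (orth_proj (orth_compl W) u - c2 - B2 (orth_proj W u)) \<le> E_wc W A M + eps" .
    qed
    moreover have "F_obj W M cbar Bbar \<le> F_obj W M c2 B2" by (rule minimizer[OF c2in B2lin B2in])
    ultimately show ?thesis using Et_F by simp
  qed
  have bddE: "bdd_below ((\<lambda>A. E_wc W A M) ` {A. affine_on W A})"
    by (rule bdd_belowI2[where m=0]) (use nonneg in auto)
  have part1: "E_wca_opt W M \<le> E_wc W Atilde M"
    unfolding E_wca_opt_def using bddE At_aff by (intro cINF_lower) simp_all
  have "E_wc W Atilde M - eps \<le> E_wca_opt W M"
    unfolding E_wca_opt_def using At_aff by (intro cINF_greatest) (auto dest: key)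
  then show ?thesis using part1 by simp
qed

end
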